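(* Let $M\in\mathrm{Mat}(d,\mathbb{Z})$ with $D=\det(M)$, and let $r\in\mathbb{N}$. (a) Let $p\neq2$ be a prime. If $M$ is reversible mod $p^r$, then $D\equiv\pm1\pmod{p^r}$. If $d=2$, then $M$ is reversible mod $p^r$ if and only if $D\equiv1\pmod{p^r}$ or $M^2\equiv\mathbb{1}\pmod{p^r}$. (b) If $M$ is reversible mod $2^r$, then $D\equiv\pm1\pmod{2^{r-1}}$. If moreover $d=2$, $r\ge2$, $M$ is reversible mod $2^r$ and $D\equiv-1\pmod{2^{r-1}}$, then $M^2\equiv\mathbb{1}\pmod{2^{r-2}}$.
   Context: An integer matrix $M$ whose determinant is a unit mod $n$ is reversible mod $n$ if there exists $R\in\mathrm{GL}(d,\mathbb{Z}/n\mathbb{Z})$ with $RMR^{-1}\equiv M^{-1}\pmod n$, where $M^{-1}$ is the inverse of $M$ over $\mathbb{Z}/n\mathbb{Z}$. *)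

theory Defs
  imports "Jordan_Normal_Form.Determinant" "HOL-Number_Theory.Cong"
begin

definition mat_cong :: "int \<Rightarrow> int mat \<Rightarrow> int mat \<Rightarrow> bool" where
  "mat_cong n A B \<longleftrightarrow> dim_row A = dim_row B \<and> dim_col A = dim_col B \<and>
     (\<forall>i<dim_row A. \<forall>j<dim_col A. [A $$ (i,j) = B $$ (i,j)] (mod n))"

definition reversible_mod :: "int \<Rightarrow> int mat \<Rightarrow> bool" where
  "reversible_mod n M \<longleftrightarrow>
     (let d = dim_row M in
       M \<in> carrier_mat d d \<and> coprime (det M) n \<and>
       (\<exists>R Rinv Minv. R \<in> carrier_mat d d \<and> Rinv \<in> carrier_mat d d \<and> Minv \<in> carrier_mat d d \<and>
          mat_cong n (R * Rinv) (1\<^sub>m d) \<and> mat_cong n (Rinv * R) (1\<^sub>m d) \<and>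
          mat_cong n (M * Minv) (1\<^sub>m d) \<and> mat_cong n (Minv * M) (1\<^sub>m d) \<and>
          mat_cong n (R * M * Rinv) Minv))"

end

theory Submission
  imports Defs
begin

lemma det1: assumes "A \<in> carrier_mat 1 1" shows "det A = A $$ (0,0)"
proof -
  have "mat_delete A 0 0 \<in> carrier_mat 0 0" using mat_delete_carrier[OF assms] by simp
  then show ?thesis using laplace_expansion_column[OF assms, of 0] by (simp add: cofactor_def)
qed

lemma det2: assumes "A \<in> carrier_mat 2 2"
  shows "det A = A $$ (0,0) * A $$ (1,1) - A $$ (0,1) * A $$ (1,0)"
proof -
  have "det A = (\<Sum>i<2. A $$ (i,0) * cofactor A i 0)"
    using laplace_expansion_column[OF assms, of 0] by simp
  also have "\<dots> = A $$ (0,0) * cofactor A 0 0 + A $$ (1,0) * cofactor A 1 0"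
    by (simp add: numeral_2_eq_2)
  also have "cofactor A 0 0 = A $$ (1,1)"
    unfolding cofactor_def using assms mat_delete_carrier[OF assms, of 0 0]
    by (subst det1) (auto simp: mat_delete_def insert_index_def)
  also have "cofactor A 1 0 = - A $$ (0,1)"
    unfolding cofactor_def using assms mat_delete_carrier[OF assms, of 1 0]
    by (subst det1) (auto simp: mat_delete_def insert_index_def)
  finally show ?thesis by (simp add: algebra_simps)
qed

lemma mat_cong_refl: "mat_cong n A A" by (simp add: mat_cong_def)
lemma mat_cong_sym: "mat_cong n A B \<Longrightarrow> mat_cong n B A"
  by (auto simp: mat_cong_def cong_sym)
lemma mat_cong_trans: "mat_cong n A B \<Longrightarrow> mat_cong n B C \<Longrightarrow> mat_cong n A C"
  unfolding mat_cong_def by (metis cong_trans)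
lemma mat_cong_dvd: "mat_cong n A B \<Longrightarrow> m dvd n \<Longrightarrow> mat_cong m A B"
  unfolding mat_cong_def by (metis cong_dvd_modulus)

lemma mat_cong_mult:
  assumes A: "A \<in> carrier_mat n k" "A' \<in> carrier_mat n k"
    and B: "B \<in> carrier_mat k m" "B' \<in> carrier_mat k m"
    and c: "mat_cong q A A'" "mat_cong q B B'"
  shows "mat_cong q (A * B) (A' * B')"
  unfolding mat_cong_def
proof (intro conjI allI impI)
  fix i j assume i: "i < dim_row (A * B)" and j: "j < dim_col (A * B)"
  have "(A * B) $$ (i,j) = (\<Sum>l<k. A $$ (i,l) * B $$ (l,j))"
    using A B i j by (simp add: scalar_prod_def atLeast0LessThan)
  also have "[\<dots> = (\<Sum>l<k. A' $$ (i,l) * B' $$ (l,j))] (mod q)"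
    using c A B i j unfolding mat_cong_def
    by (intro cong_sum cong_mult) auto
  also have "(\<Sum>l<k. A' $$ (i,l) * B' $$ (l,j)) = (A' * B') $$ (i,j)"
    using A B i j by (simp add: scalar_prod_def atLeast0LessThan)
  finally show "[(A * B) $$ (i,j) = (A' * B') $$ (i,j)] (mod q)" .
qed (use A B in auto)

lemma mat_cong_det:
  assumes A: "A \<in> carrier_mat n n" "B \<in> carrier_mat n n" and c: "mat_cong q A B"
  shows "[det A = det B] (mod q)"
  unfolding det_def'[OF A(1)] det_def'[OF A(2)]
proof (intro cong_sum cong_mult cong_refl cong_prod)
  fix p i assume "p \<in> {p. p permutes {0..<n}}" "i \<in> {0..<n}"
  then have "p i < n" using permutes_in_image by fastforce
  then show "[A $$ (i, p i) = B $$ (i, p i)] (mod q)"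
    using c A \<open>i \<in> _\<close> unfolding mat_cong_def by auto
qed

definition tr :: "int mat \<Rightarrow> int" where "tr A = (\<Sum>i<dim_row A. A $$ (i,i))"

lemma tr_comm: assumes "A \<in> carrier_mat n m" "B \<in> carrier_mat m n"
  shows "tr (A * B) = tr (B * A)"
proof -
  have "tr (A * B) = (\<Sum>i<n. \<Sum>l<m. A $$ (i,l) * B $$ (l,i))"
    using assms by (simp add: tr_def scalar_prod_def atLeast0LessThan)
  also have "\<dots> = (\<Sum>l<m. \<Sum>i<n. B $$ (l,i) * A $$ (i,l))"
    by (subst sum.swap) (simp add: mult.commute)
  also have "\<dots> = tr (B * A)"
    using assms by (simp add: tr_def scalar_prod_def atLeast0LessThan)
  finally show ?thesis .
qed

lemma mat_cong_tr: assumes "mat_cong q A B" "A \<in> carrier_mat n n" shows "[tr A = tr B] (mod q)"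
  using assms unfolding mat_cong_def tr_def by (auto intro!: cong_sum)

lemma tr_smult: "A \<in> carrier_mat n n \<Longrightarrow> tr (x \<cdot>\<^sub>m A) = x * tr A"
  by (simp add: tr_def sum_distrib_left)

lemma tr2: "A \<in> carrier_mat 2 2 \<Longrightarrow> tr A = A $$ (0,0) + A $$ (1,1)"
  by (simp add: tr_def numeral_2_eq_2)
definition m2 :: "int \<Rightarrow> int \<Rightarrow> int \<Rightarrow> int \<Rightarrow> int mat" where
  "m2 a b c e = mat 2 2 (\<lambda>(i,j). if i = 0 then (if j = 0 then a else b) else (if j = 0 then c else e))"

lemma m2_carrier[simp]: "m2 a b c e \<in> carrier_mat 2 2" by (simp add: m2_def)
lemma m2_dims[simp]: "dim_row (m2 a b c e) = 2" "dim_col (m2 a b c e) = 2" by (simp_all add: m2_def)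
lemma m2_idx[simp]: "m2 a b c e $$ (0,0) = a" "m2 a b c e $$ (0,1) = b"
  "m2 a b c e $$ (1,0) = c" "m2 a b c e $$ (1,1) = e"
  "m2 a b c e $$ (0,Suc 0) = b"
  "m2 a b c e $$ (Suc 0,0) = c" "m2 a b c e $$ (Suc 0,Suc 0) = e" by (simp_all add: m2_def)

lemma less2: "(i::nat) < 2 \<Longrightarrow> i = 0 \<or> i = 1" by auto

lemma all_less2: "(\<forall>i<2::nat. P i) \<longleftrightarrow> P 0 \<and> P 1" by (auto dest: less2)

lemma m2_eta: assumes "M \<in> carrier_mat 2 2"
  shows "M = m2 (M $$ (0,0)) (M $$ (0,1)) (M $$ (1,0)) (M $$ (1,1))"
  by (rule eq_matI) (use assms in \<open>auto dest!: less2\<close>)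

lemma m2_mult: "m2 a b c e * m2 a' b' c' e' = m2 (a*a'+b*c') (a*b'+b*e') (c*a'+e*c') (c*b'+e*e')"
  by (rule eq_matI) (auto simp: scalar_prod_def numeral_2_eq_2 less_Suc_eq)

lemma m2_one: "1\<^sub>m 2 = m2 1 0 0 1"
  by (rule eq_matI) (auto dest!: less2)

lemma m2_smult: "x \<cdot>\<^sub>m m2 a b c e = m2 (x*a) (x*b) (x*c) (x*e)"
  by (rule eq_matI) (auto dest!: less2)

lemma m2_det: "det (m2 a b c e) = a*e - b*c"
  by (simp add: det2)

lemma m2_cong: "mat_cong q (m2 a b c e) (m2 a' b' c' e') \<longleftrightarrow>
  [a = a'] (mod q) \<and> [b = b'] (mod q) \<and> [c = c'] (mod q) \<and> [e = e'] (mod q)"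
  unfolding mat_cong_def by (simp add: all_less2)
lemma rev_det_sq: assumes "reversible_mod n M" shows "[det M * det M = 1] (mod n)"
proof -
  define d where "d = dim_row M"
  from assms obtain R Rinv Minv where M: "M \<in> carrier_mat d d" and
    R: "R \<in> carrier_mat d d" "Rinv \<in> carrier_mat d d" "Minv \<in> carrier_mat d d" and
    c1: "mat_cong n (R * Rinv) (1\<^sub>m d)" and c2: "mat_cong n (M * Minv) (1\<^sub>m d)" and
    c3: "mat_cong n (R * M * Rinv) Minv"
    unfolding reversible_mod_def Let_def d_def by blast
  have "[det (R * Rinv) = det (1\<^sub>m d)] (mod n)"
    by (rule mat_cong_det[OF _ _ c1]) (use R in auto)
  then have h1: "[det R * det Rinv = 1] (mod n)" using R by (simp add: det_mult)
  have "[det (M * Minv) = det (1\<^sub>m d)] (mod n)"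
    by (rule mat_cong_det[OF _ _ c2]) (use R M in auto)
  then have h2: "[det M * det Minv = 1] (mod n)" using R M by (simp add: det_mult)
  have "[det (R * M * Rinv) = det Minv] (mod n)"
    by (rule mat_cong_det[OF _ _ c3]) (use R M in auto)
  then have h3: "[det R * det M * det Rinv = det Minv] (mod n)" using R M
    by (simp add: det_mult mult.assoc)
  have "[det M * 1 = det M * (det R * det Rinv)] (mod n)"
    using h1 by (intro cong_mult cong_refl) (rule cong_sym)
  also have "det M * (det R * det Rinv) = det R * det M * det Rinv" by simp
  also note h3
  finally have "[det M = det Minv] (mod n)" by simp
  then have "[det M * det M = det M * det Minv] (mod n)" by (intro cong_mult cong_refl)
  then show ?thesis using h2 by (rule cong_trans)
qed

lemma cayley2: assumes "M \<in> carrier_mat 2 2"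
  shows "M * M = m2 (tr M * M $$ (0,0) - det M) (tr M * M $$ (0,1))
                    (tr M * M $$ (1,0)) (tr M * M $$ (1,1) - det M)"
  apply (subst (1 2) m2_eta[OF assms])
  apply (simp add: m2_mult det2[OF assms] tr2[OF assms])
  apply (simp add: algebra_simps)
  done

lemma adj2: "m2 e (-b) (-c) a * m2 a b c e = (a*e-b*c) \<cdot>\<^sub>m 1\<^sub>m 2"
  "m2 a b c e * m2 e (-b) (-c) a = (a*e-b*c) \<cdot>\<^sub>m 1\<^sub>m 2"
  by (simp_all add: m2_mult m2_one m2_smult algebra_simps)

lemma rev_tr: assumes M: "M \<in> carrier_mat 2 2" and rv: "reversible_mod n M"
  shows "[(det M - 1) * tr M = 0] (mod n)"
proof -
  from rv M obtain R Rinv Minv where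
    R: "R \<in> carrier_mat 2 2" "Rinv \<in> carrier_mat 2 2" "Minv \<in> carrier_mat 2 2" and
    c1: "mat_cong n (Rinv * R) (1\<^sub>m 2)" and c2: "mat_cong n (M * Minv) (1\<^sub>m 2)" and
    c3: "mat_cong n (R * M * Rinv) Minv"
    unfolding reversible_mod_def Let_def by auto
  have "tr (R * M * Rinv) = tr (Rinv * (R * M))"
    by (rule tr_comm) (use R M in auto)
  also have "Rinv * (R * M) = (Rinv * R) * M" using R M by simp
  finally have e1: "tr (R * M * Rinv) = tr ((Rinv * R) * M)" .
  have "mat_cong n ((Rinv * R) * M) (1\<^sub>m 2 * M)"
    by (rule mat_cong_mult[OF _ _ _ _ c1 mat_cong_refl]) (use R M in auto)
  then have "[tr ((Rinv * R) * M) = tr M] (mod n)"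
    using M R by (intro mat_cong_tr[of _ _ _ 2]) auto
  moreover have "[tr (R * M * Rinv) = tr Minv] (mod n)"
    using c3 R M by (intro mat_cong_tr[of _ _ _ 2]) auto
  ultimately have t1: "[tr M = tr Minv] (mod n)" using e1
    by (metis cong_sym cong_trans)
  define adj where "adj = m2 (M $$ (1,1)) (- M $$ (0,1)) (- M $$ (1,0)) (M $$ (0,0))"
  have adjC: "adj \<in> carrier_mat 2 2" by (simp add: adj_def)
  have adjM: "adj * M = det M \<cdot>\<^sub>m 1\<^sub>m 2"
    unfolding adj_def det2[OF M] using adj2(1)[of "M $$ (1,1)" "M $$ (0,1)" "M $$ (1,0)" "M $$ (0,0)"]
    m2_eta[OF M] by metis
  have "mat_cong n (adj * (M * Minv)) (adj * 1\<^sub>m 2)"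
    by (rule mat_cong_mult[OF _ _ _ _ mat_cong_refl c2]) (use R M adjC in auto)
  moreover have "adj * (M * Minv) = det M \<cdot>\<^sub>m Minv"
  proof -
    have "adj * (M * Minv) = (adj * M) * Minv" using adjC M R by simp
    also have "\<dots> = det M \<cdot>\<^sub>m Minv" using R
      by (simp add: adjM mult_smult_assoc_mat[of _ 2 2])
    finally show ?thesis .
  qed
  ultimately have "mat_cong n (det M \<cdot>\<^sub>m Minv) adj" using adjC by simp
  then have "[tr (det M \<cdot>\<^sub>m Minv) = tr adj] (mod n)" using R by (intro mat_cong_tr[of _ _ _ 2]) auto
  moreover have "tr (det M \<cdot>\<^sub>m Minv) = det M * tr Minv" using R by (simp add: tr_smult)
  moreover have "tr adj = tr M" by (simp add: adj_def tr2[OF M] tr2)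
  ultimately have t2: "[det M * tr Minv = tr M] (mod n)" by simp
  have "[det M * tr M = det M * tr Minv] (mod n)" using t1 by (intro cong_mult cong_refl)
  with t2 have "[det M * tr M = tr M] (mod n)" by (rule cong_trans[rotated])
  then show ?thesis by (simp add: cong_iff_dvd_diff algebra_simps)
qed
lemma odd_prime_not_dvd2: assumes "prime (p::int)" "p \<noteq> 2" shows "\<not> p dvd 2"
proof
  assume "p dvd 2"
  then have "p \<le> 2" by (simp add: zdvd_imp_le)
  moreover have "p \<ge> 2" using assms prime_ge_2_int by blast
  ultimately show False using assms by simp
qed

lemma pow_dvd_coprime: assumes "prime (p::int)" "\<not> p dvd a" "p ^ r dvd a * b" shows "p ^ r dvd b"
proof -
  have "coprime p a" using assms by (simp add: prime_imp_coprime)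
  then have "coprime (p ^ r) a" by simp
  then show ?thesis using assms(3) by (simp add: coprime_dvd_mult_right_iff)
qed

lemma odd_sq: assumes p: "prime (p::int)" "p \<noteq> 2" and c: "[x * x = 1] (mod p ^ r)"
  shows "[x = 1] (mod p ^ r) \<or> [x = -1] (mod p ^ r)"
proof -
  have d: "p ^ r dvd (x - 1) * (x + 1)" using c by (simp add: cong_iff_dvd_diff algebra_simps)
  have "\<not> (p dvd x - 1 \<and> p dvd x + 1)"
  proof
    assume "p dvd x - 1 \<and> p dvd x + 1"
    then have "p dvd (x + 1) - (x - 1)" using dvd_diff by blast
    then have "p dvd 2" by simp
    then show False using odd_prime_not_dvd2[OF p] by simp
  qed
  then consider "\<not> p dvd x - 1" | "\<not> p dvd x + 1" by blast
  then show ?thesis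
  proof cases
    case 1
    then have "\<not> p dvd x - 1" .
    then have "p ^ r dvd x + 1" using pow_dvd_coprime[OF p(1) _ d] by blast
    then show ?thesis by (simp add: cong_iff_dvd_diff)
  next
    case 2
    then have "p ^ r dvd x - 1" using pow_dvd_coprime[OF p(1), of "x+1" r "x - 1"] d
      by (simp add: mult.commute)
    then show ?thesis by (simp add: cong_iff_dvd_diff)
  qed
qed

lemma cong_mod1: "[a = b] (mod (1::int))" by (simp add: cong_def)

lemma two_sq: assumes c: "[x * x = 1] (mod 2 ^ r)"
  shows "[x = 1] (mod 2 ^ (r - 1)) \<or> [x = -1] (mod (2::int) ^ (r - 1))"
proof (cases "r \<ge> 2")
  case False
  then have "r - 1 = 0" by simp
  then show ?thesis by (simp add: cong_mod1)
next
  case True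
  then obtain s where r: "r = s + 2" by (metis add.commute le_add_diff_inverse)
  have d: "2 ^ r dvd x * x - 1" using c by (simp add: cong_iff_dvd_diff)
  moreover have "(2::int) dvd 2 ^ r" using r by simp
  ultimately have "(2::int) dvd x * x - 1" by (blast intro: dvd_trans)
  then have "odd x" by auto
  then obtain k where k: "x = 2 * k + 1" by (metis oddE)
  have "x * x - 1 = 4 * (k * (k + 1))" using k by (simp add: algebra_simps)
  with d r have "4 * 2 ^ s dvd 4 * (k * (k + 1))" by (simp add: power_add mult.commute)
  then have d2: "2 ^ s dvd k * (k + 1)" using dvd_mult_cancel_left[of 4 "2 ^ s" "k * (k + 1)"] by simp
  show ?thesis
  proof (cases "even k")
    case True
    then have "\<not> 2 dvd k + 1" by simp
    then have "2 ^ s dvd k" using pow_dvd_coprime[of 2 "k+1" s k] d2 by (simp add: mult.commute)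
    then have "2 * 2 ^ s dvd 2 * k" using mult_dvd_mono[OF dvd_refl[of 2]] by blast
    then show ?thesis using r k by (simp add: cong_iff_dvd_diff)
  next
    case False
    then have "2 ^ s dvd k + 1" using pow_dvd_coprime[of 2 k s "k+1"] d2 by simp
    then have "2 * 2 ^ s dvd 2 * (k + 1)" using mult_dvd_mono[OF dvd_refl[of 2]] by blast
    moreover have "x + 1 = 2 * (k + 1)" using k by simp
    moreover have "(2::int) ^ (r - 1) = 2 * 2 ^ s" using r by simp
    ultimately have "2 ^ (r - 1) dvd x + 1" by (simp only:)
    then show ?thesis by (simp add: cong_iff_dvd_diff)
  qed
qed

lemma odd_tr: assumes p: "prime (p::int)" "p \<noteq> 2" and c: "[(D - 1) * t = 0] (mod p ^ r)"
  and D: "[D = -1] (mod p ^ r)" shows "p ^ r dvd t"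
proof -
  have "[(D - 1) * t = (-1 - 1) * t] (mod p ^ r)" using D by (intro cong_mult cong_diff cong_refl)
  then have "[(-1 - 1) * t = 0] (mod p ^ r)" using c by (blast intro: cong_trans cong_sym)
  then have "[-2 * t = 0] (mod p ^ r)" by simp
  then have "p ^ r dvd 2 * t" by (simp add: cong_0_iff)
  then show ?thesis using pow_dvd_coprime[OF p(1) odd_prime_not_dvd2[OF p]] by blast
qed

lemma two_tr: assumes r: "r \<ge> 3" and c: "[(D - 1) * t = 0] (mod (2::int) ^ r)"
  and D: "[D = -1] (mod 2 ^ (r - 1))" shows "2 ^ (r - 1) dvd t"
proof -
  obtain s where rs: "r = s + 3" using r by (metis add.commute le_add_diff_inverse)
  from D obtain m where m: "D + 1 = 2 ^ (s + 2) * m" using rs by (auto simp: cong_iff_dvd_diff elim!: dvdE)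
  have "D - 1 = 2 * (2 ^ (s + 1) * m - 1)" using m by (simp add: algebra_simps)
  then have e: "(D - 1) * t = 2 * ((2 ^ (s + 1) * m - 1) * t)" by simp
  have e2: "(2::int) ^ r = 2 * 2 ^ (s + 2)" using rs by (simp add: power_add)
  define Y where "Y = (2 ^ (s + 1) * m - 1) * t"
  have "2 * 2 ^ (s + 2) dvd 2 * Y"
    using c unfolding cong_0_iff e e2 Y_def .
  then have "2 ^ (s + 2) dvd Y" using dvd_mult_cancel_left[of "2::int" "2^(s+2)" Y] by simp
  then have "2 ^ (s + 2) dvd (2 ^ (s + 1) * m - 1) * t" by (simp add: Y_def)
  moreover have "\<not> (2::int) dvd 2 ^ (s + 1) * m - 1" by simp
  ultimately have "2 ^ (s + 2) dvd t"
    using pow_dvd_coprime[of 2 "2 ^ (s + 1) * m - 1" "s + 2" t] by simp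
  then show ?thesis using rs by simp
qed

lemma find_R: assumes p: "prime (p::int)"
  shows "\<exists>x y z. x * (a - e) + c * y + b * z = 0 \<and> \<not> p dvd (x * x + y * z)"
proof (cases "gcd (a - e) (gcd b c) = 0")
  case True
  then have "a - e = 0" "b = 0" "c = 0" by auto
  then show ?thesis using p by (intro exI[of _ 1] exI[of _ 0]) (auto simp: not_prime_unit)
next
  case False
  define g where "g = gcd (a - e) (gcd b c)"
  have "g dvd a - e" "g dvd b" "g dvd c" unfolding g_def by (auto intro: dvd_trans)
  then obtain \<alpha> \<beta> \<gamma> where abc: "a - e = g * \<alpha>" "b = g * \<beta>" "c = g * \<gamma>" by (metis dvdE)
  have g0: "g \<noteq> 0" using False g_def by simp
  show ?thesis
  proof (cases "p dvd \<gamma>")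
    case False
    show ?thesis
      apply (rule exI[of _ \<gamma>], rule exI[of _ "-\<alpha>"], rule exI[of _ 0])
      using False p abc by (auto simp: algebra_simps prime_dvd_mult_iff)
  next
    case pg: True
    show ?thesis
    proof (cases "p dvd \<beta>")
      case False
      show ?thesis
        apply (rule exI[of _ \<beta>], rule exI[of _ 0], rule exI[of _ "-\<alpha>"])
        using False p abc by (auto simp: algebra_simps prime_dvd_mult_iff)
    next
      case pb: True
      show ?thesis
      proof (cases "p dvd \<alpha>")
        case False
        have "\<not> p dvd (\<beta> - \<gamma>) * (\<beta> - \<gamma>) + \<alpha> * - \<alpha>"
        proof
          assume h: "p dvd (\<beta> - \<gamma>) * (\<beta> - \<gamma>) + \<alpha> * - \<alpha>"
          have "p dvd (\<beta> - \<gamma>) * (\<beta> - \<gamma>)" using pg pb by auto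
          then have "p dvd \<alpha> * \<alpha>" using h by (metis dvd_add_right_iff dvd_minus_iff mult_minus_right)
          then show False using False p by (auto simp: prime_dvd_mult_iff)
        qed
        moreover have "(\<beta> - \<gamma>) * (a - e) + c * \<alpha> + b * (-\<alpha>) = 0"
          using abc by (simp add: algebra_simps)
        ultimately show ?thesis by blast
      next
        case True
        then obtain \<alpha>' \<beta>' \<gamma>' where "\<alpha> = p * \<alpha>'" "\<beta> = p * \<beta>'" "\<gamma> = p * \<gamma>'"
          using pg pb by (metis dvdE)
        then have "g * p dvd a - e" "g * p dvd b" "g * p dvd c" using abc by (auto simp: mult.assoc)
        then have "g * p dvd g" unfolding g_def by (metis gcd_greatest)
        then have "g * p dvd g * 1" by simp
        then have "p dvd 1" using g0 by (metis dvd_mult_cancel_left)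
        then show ?thesis using p by (auto simp: not_prime_unit)
      qed
    qed
  qed
qed
lemma sq_from_tr: assumes M: "M \<in> carrier_mat 2 2" and t: "[tr M = 0] (mod q)"
  and D: "[det M = -1] (mod q)" shows "mat_cong q (M * M) (1\<^sub>m 2)"
proof -
  have tx: "[tr M * x = 0] (mod q)" for x using cong_mult[OF t cong_refl[of x]] by simp
  have tD: "[tr M * x - det M = 1] (mod q)" for x using cong_diff[OF tx D] by simp
  show ?thesis unfolding cayley2[OF M] m2_one m2_cong using tx tD by auto
qed

lemma conv_sq: assumes M: "M \<in> carrier_mat 2 2" and c: "mat_cong n (M * M) (1\<^sub>m 2)"
  shows "reversible_mod n M"
proof -
  have "[det (M * M) = det (1\<^sub>m 2)] (mod n)" by (rule mat_cong_det[OF _ _ c]) (use M in auto)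
  then have "[det M * det M = 1] (mod n)" using M by (simp add: det_mult)
  then have "coprime (det M) n" unfolding coprime_iff_invertible_int by blast
  moreover have "\<exists>R Rinv Minv. R \<in> carrier_mat 2 2 \<and> Rinv \<in> carrier_mat 2 2 \<and> Minv \<in> carrier_mat 2 2 \<and>
          mat_cong n (R * Rinv) (1\<^sub>m 2) \<and> mat_cong n (Rinv * R) (1\<^sub>m 2) \<and>
          mat_cong n (M * Minv) (1\<^sub>m 2) \<and> mat_cong n (Minv * M) (1\<^sub>m 2) \<and>
          mat_cong n (R * M * Rinv) Minv"
    apply (rule exI[where x="1\<^sub>m 2"], rule exI[where x="1\<^sub>m 2"], rule exI[where x=M])
    using M c by (simp add: mat_cong_refl)
  moreover have "dim_row M = 2" using M by simp
  ultimately show ?thesis unfolding reversible_mod_def Let_def using M by simp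
qed

lemma lin: "P - Q = E \<Longrightarrow> E = 0 \<Longrightarrow> P = (Q::int)" by simp

lemma conv_det1: assumes M: "M \<in> carrier_mat 2 2" and p: "prime (p::int)"
  and D: "[det M = 1] (mod p ^ r)" shows "reversible_mod (p ^ r) M"
proof -
  define n where "n = p ^ r"
  define a b c e where "a = M $$ (0,0)" "b = M $$ (0,1)" "c = M $$ (1,0)" "e = M $$ (1,1)"
  have Meq: "M = m2 a b c e" using m2_eta[OF M] by (simp add: a_b_c_e_def)
  have detM: "det M = a * e - b * c" unfolding Meq m2_det ..
  obtain x y z where eq: "x * (a - e) + c * y + b * z = 0" and nd: "\<not> p dvd (x * x + y * z)"
    using find_R[OF p] by blast
  define \<delta> where "\<delta> = - (x * x + y * z)"
  have "coprime p (x * x + y * z)" using nd p by (simp add: prime_imp_coprime)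
  then have "coprime (x * x + y * z) (p ^ r)" by (simp add: coprime_commute)
  then have "coprime (- (x * x + y * z)) (p ^ r)" by (simp only: coprime_minus_left_iff)
  then have "coprime \<delta> n" unfolding \<delta>_def n_def .
  then obtain u where u: "[\<delta> * u = 1] (mod n)" using cong_solve_coprime_int by blast
  define R where "R = m2 x y z (-x)"
  define Rinv where "Rinv = m2 (-u*x) (-u*y) (-u*z) (u*x)"
  define Minv where "Minv = m2 e (-b) (-c) a"
  have RR: "R * Rinv = m2 (\<delta> * u) 0 0 (\<delta> * u)" "Rinv * R = m2 (\<delta> * u) 0 0 (\<delta> * u)"
    unfolding R_def Rinv_def \<delta>_def by (simp_all add: m2_mult algebra_simps)
  have cRR: "mat_cong n (m2 (\<delta> * u) 0 0 (\<delta> * u)) (1\<^sub>m 2)"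
    unfolding m2_one m2_cong using u by simp
  have Dn: "[det M = 1] (mod n)" using D by (simp add: n_def)
  have cMM: "mat_cong n (m2 (det M) 0 0 (det M)) (1\<^sub>m 2)"
    unfolding m2_one m2_cong using Dn by simp
  have MM: "M * Minv = m2 (det M) 0 0 (det M)" "Minv * M = m2 (det M) 0 0 (det M)"
    unfolding Meq Minv_def by (simp_all add: adj2 m2_one m2_smult m2_det)
  have RM: "R * M = Minv * R"
    unfolding Meq Minv_def R_def m2_mult
  proof -
    have "x * a + y * c = e * x + - b * z" "x * b + y * e = e * y + - b * - x"
      "z * a + - x * c = - c * x + a * z" "z * b + - x * e = - c * y + a * - x"
      using lin[OF _ eq] by (simp_all add: algebra_simps)
    then show "m2 (x * a + y * c) (x * b + y * e) (z * a + - x * c) (z * b + - x * e) =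
      m2 (e * x + - b * z) (e * y + - b * - x) (- c * x + a * z) (- c * y + a * - x)"
      by (simp only: mult_minus_left mult_minus_right minus_minus ac_simps)
  qed
  have RC: "R \<in> carrier_mat 2 2" "Rinv \<in> carrier_mat 2 2" "Minv \<in> carrier_mat 2 2"
    by (simp_all add: R_def Rinv_def Minv_def)
  have "R * M * Rinv = Minv * (R * Rinv)" using RC M by (simp add: RM)
  moreover have "mat_cong n (Minv * (R * Rinv)) (Minv * 1\<^sub>m 2)"
    by (rule mat_cong_mult[OF _ _ _ _ mat_cong_refl]) (use RC cRR RR in auto)
  ultimately have c3: "mat_cong n (R * M * Rinv) Minv" using RC by simp
  have "coprime (det M) n" using cong_imp_coprime[OF cong_sym[OF Dn]] by simp
  moreover have "\<exists>R Rinv Minv. R \<in> carrier_mat 2 2 \<and> Rinv \<in> carrier_mat 2 2 \<and> Minv \<in> carrier_mat 2 2 \<and>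
          mat_cong n (R * Rinv) (1\<^sub>m 2) \<and> mat_cong n (Rinv * R) (1\<^sub>m 2) \<and>
          mat_cong n (M * Minv) (1\<^sub>m 2) \<and> mat_cong n (Minv * M) (1\<^sub>m 2) \<and>
          mat_cong n (R * M * Rinv) Minv"
    apply (rule exI[where x=R], rule exI[where x=Rinv], rule exI[where x=Minv])
    using RC c3 cRR cMM RR MM by simp
  moreover have "dim_row M = 2" using M by simp
  ultimately have "reversible_mod n M" unfolding reversible_mod_def Let_def using M by simp
  then show ?thesis by (simp add: n_def)
qed
theorem lemma4p11:
  fixes M :: "int mat" and d r :: nat
  assumes "M \<in> carrier_mat d d"
  shows "(\<forall>p::int. prime p \<and> p \<noteq> 2 \<longrightarrow>
            (reversible_mod (p ^ r) M \<longrightarrow>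
               [det M = 1] (mod p ^ r) \<or> [det M = -1] (mod p ^ r)) \<and>
            (d = 2 \<longrightarrow>
               (reversible_mod (p ^ r) M \<longleftrightarrow>
                  [det M = 1] (mod p ^ r) \<or> mat_cong (p ^ r) (M * M) (1\<^sub>m 2))))
       \<and> (reversible_mod (2 ^ r) M \<longrightarrow>
            [det M = 1] (mod 2 ^ (r - 1)) \<or> [det M = -1] (mod 2 ^ (r - 1)))
       \<and> (d = 2 \<and> r \<ge> 2 \<and> reversible_mod (2 ^ r) M \<and> [det M = -1] (mod 2 ^ (r - 1)) \<longrightarrow>
            mat_cong (2 ^ (r - 2)) (M * M) (1\<^sub>m 2))"
proof (intro conjI allI impI)
  fix p :: int assume p: "prime p \<and> p \<noteq> 2"
  show "reversible_mod (p ^ r) M \<Longrightarrow> [det M = 1] (mod p ^ r) \<or> [det M = -1] (mod p ^ r)"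
    using p odd_sq rev_det_sq by blast
  assume d2: "d = 2"
  then have M: "M \<in> carrier_mat 2 2" using assms by simp
  show "reversible_mod (p ^ r) M \<longleftrightarrow>
        [det M = 1] (mod p ^ r) \<or> mat_cong (p ^ r) (M * M) (1\<^sub>m 2)"
  proof
    assume rv: "reversible_mod (p ^ r) M"
    then have "[det M = 1] (mod p ^ r) \<or> [det M = -1] (mod p ^ r)"
      using p odd_sq rev_det_sq by blast
    moreover
    {
      assume D: "[det M = -1] (mod p ^ r)"
      have "p ^ r dvd tr M" using odd_tr[OF _ _ rev_tr[OF M rv] D] p by blast
      then have "[tr M = 0] (mod p ^ r)" by (simp add: cong_0_iff)
      then have "mat_cong (p ^ r) (M * M) (1\<^sub>m 2)" using sq_from_tr[OF M _ D] by blast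
    }
    ultimately show "[det M = 1] (mod p ^ r) \<or> mat_cong (p ^ r) (M * M) (1\<^sub>m 2)" by blast
  next
    assume "[det M = 1] (mod p ^ r) \<or> mat_cong (p ^ r) (M * M) (1\<^sub>m 2)"
    then show "reversible_mod (p ^ r) M" using conv_det1[OF M] conv_sq[OF M] p by blast
  qed
next
  assume "reversible_mod (2 ^ r) M"
  then show "[det M = 1] (mod 2 ^ (r - 1)) \<or> [det M = -1] (mod 2 ^ (r - 1))"
    using two_sq rev_det_sq by blast
next
  assume h: "d = 2 \<and> r \<ge> 2 \<and> reversible_mod (2 ^ r) M \<and> [det M = -1] (mod 2 ^ (r - 1))"
  then have M: "M \<in> carrier_mat 2 2" using assms by simp
  show "mat_cong (2 ^ (r - 2)) (M * M) (1\<^sub>m 2)"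
  proof (cases "r = 2")
    case True
    then show ?thesis using M by (simp add: mat_cong_def cong_mod1)
  next
    case False
    then have r3: "r \<ge> 3" using h by simp
    have "2 ^ (r - 1) dvd tr M" using two_tr[OF r3 rev_tr[OF M] ] h by blast
    then have "[tr M = 0] (mod 2 ^ (r - 1))" by (simp add: cong_0_iff)
    then have "mat_cong (2 ^ (r - 1)) (M * M) (1\<^sub>m 2)" using sq_from_tr[OF M] h by blast
    moreover have "(2::int) ^ (r - 2) dvd 2 ^ (r - 1)" by (rule le_imp_power_dvd) simp
    ultimately show ?thesis by (rule mat_cong_dvd)
  qed
qed

end
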